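(* Let $R$ be a discrete valuation ring with maximal ideal $\mathfrak m$, fraction field $F$ and valuation $\mathrm{ord}$. For integers $m\ge1$, $n\ge1$ let $K^M_n(F,m)$ be the subgroup of $K^M_n(F)$ generated by the Milnor symbols $\{y_1,\dots,y_n\}$ ($y_i\in F^\times$) with $\sum_{i=1}^n\mathrm{ord}(y_i-1)\ge m$. Then for every $n\ge0$, $$K^M_{n+1}(F,m)\subseteq(1+\mathfrak m^m)K^M_n(F).$$
   Context: $(1+\mathfrak m^m)K^M_n(F)$ denotes the subgroup of $K^M_{n+1}(F)$ generated by the products $\{u\}\cdot x$ with $u\in 1+\mathfrak m^m$ and $x\in K^M_n(F)$; for $n=0$ it is the image of $1+\mathfrak m^m$ in $K^M_1(F)=F^\times$. Convention $\mathrm{ord}(0)=\infty$. *)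

theory Defs
  imports Complex_Main "HOL-Library.Extended_Real"
begin

text \<open>A normalized discrete valuation v on the field F (values on nonzero elements;
 v 0 is irrelevant). Its valuation ring R = {0} \<union> {x. v x \<ge> 0} is a DVR with
 fraction field F and maximal ideal {0} \<union> {x. v x \<ge> 1}; every DVR arises so.\<close>

definition discrete_valuation :: "('a::field \<Rightarrow> int) \<Rightarrow> bool" where
  "discrete_valuation v \<longleftrightarrow>
     (\<forall>x y. x \<noteq> 0 \<longrightarrow> y \<noteq> 0 \<longrightarrow> v (x * y) = v x + v y) \<and>
     (\<forall>x y. x \<noteq> 0 \<longrightarrow> y \<noteq> 0 \<longrightarrow> x + y \<noteq> 0 \<longrightarrow> v (x + y) \<ge> min (v x) (v y)) \<and>
     (\<forall>k. \<exists>x. x \<noteq> 0 \<and> v x = k)"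

definition ord :: "('a::field \<Rightarrow> int) \<Rightarrow> 'a \<Rightarrow> ereal" where
  "ord v x = (if x = 0 then \<infinity> else ereal (of_int (v x)))"

definition one_plus_mpow :: "('a::field \<Rightarrow> int) \<Rightarrow> nat \<Rightarrow> 'a set" where
  "one_plus_mpow v m = {u. u \<noteq> 0 \<and> ord v (u - 1) \<ge> ereal (real m)}"

text \<open>Elements of the free abelian group on words (lists) over F are integer-valued
 functions on lists. zspan S is the subgroup generated by S.\<close>

inductive_set zspan :: "('b \<Rightarrow> int) set \<Rightarrow> ('b \<Rightarrow> int) set" for S where
  zero: "(\<lambda>_. 0) \<in> zspan S"
| add: "f \<in> zspan S \<Longrightarrow> s \<in> S \<Longrightarrow> (\<lambda>l. f l + s l) \<in> zspan S"
| diff: "f \<in> zspan S \<Longrightarrow> s \<in> S \<Longrightarrow> (\<lambda>l. f l - s l) \<in> zspan S"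

definition delta :: "'a list \<Rightarrow> ('a list \<Rightarrow> int)" where
  "delta xs = (\<lambda>l. if l = xs then 1 else 0)"

definition units_words :: "nat \<Rightarrow> ('a::field) list set" where
  "units_words n = {xs. length xs = n \<and> (\<forall>x\<in>set xs. x \<noteq> 0)}"

text \<open>Free abelian group on (F^\<times>)^n (this is (F^\<times>)^{\<otimes>n} before imposing
 multilinearity).\<close>
definition free_words :: "nat \<Rightarrow> (('a::field) list \<Rightarrow> int) set" where
  "free_words n = zspan (delta ` units_words n)"

text \<open>Relations defining K^M_n(F) = (F^\<times>)^{\<otimes>n} / (Steinberg): multilinearity in
 each slot, and Steinberg relations a \<otimes> (1-a) in adjacent slots.\<close>
definition milnor_rels :: "nat \<Rightarrow> (('a::field) list \<Rightarrow> int) set" where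
  "milnor_rels n =
     {(\<lambda>l. delta (xs @ [a * b] @ ys) l - delta (xs @ [a] @ ys) l - delta (xs @ [b] @ ys) l)
        | xs ys a b. xs @ [a] @ ys \<in> units_words n \<and> b \<noteq> 0}
   \<union> {delta (xs @ [a, 1 - a] @ ys) | xs ys a. xs @ [a, 1 - a] @ ys \<in> units_words n}"

text \<open>A subgroup H of K^M_n(F) given by generators S (words/elements of the free group)
 corresponds to its preimage zspan (milnor_rels n \<union> S) in the free group; inclusion of
 subgroups of K^M_n(F) is inclusion of these preimages.\<close>

text \<open>Product {u}\<cdot>x for x \<in> K^M_n(F) represented by g: represented by u prepended to
 every word (well defined on the quotient since prepending maps relations to relations).\<close>
definition sym_mult :: "'a \<Rightarrow> ('a list \<Rightarrow> int) \<Rightarrow> ('a list \<Rightarrow> int)" where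
  "sym_mult u g = (\<lambda>l. case l of [] \<Rightarrow> 0 | w # ws \<Rightarrow> (if w = u then g ws else 0))"

definition KM_m_gens :: "('a::field \<Rightarrow> int) \<Rightarrow> nat \<Rightarrow> nat \<Rightarrow> ('a list \<Rightarrow> int) set" where
  "KM_m_gens v n m = {delta ys | ys. ys \<in> units_words n \<and>
       sum_list (map (\<lambda>y. ord v (y - 1)) ys) \<ge> ereal (real m)}"

definition one_plus_mpow_K_gens :: "('a::field \<Rightarrow> int) \<Rightarrow> nat \<Rightarrow> nat \<Rightarrow> ('a list \<Rightarrow> int) set" where
  "one_plus_mpow_K_gens v m n = {sym_mult u g | u g. u \<in> one_plus_mpow v m \<and> g \<in> free_words n}"

end

theory Submission
  imports Defs "HOL-Library.Function_Algebras"
begin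

lemma zspan_zero': "0 \<in> zspan S"
  using zspan.zero[of S] by (simp add: zero_fun_def)

lemma zspan_gen: "s \<in> S \<Longrightarrow> s \<in> zspan S"
  using zspan.add[OF zspan.zero, of s S] by simp

lemma zspan_add: "g \<in> zspan S \<Longrightarrow> f \<in> zspan S \<Longrightarrow> f + g \<in> zspan S"
proof (induction g rule: zspan.induct)
  case zero
  then show ?case by (simp add: plus_fun_def)
next
  case (add g s)
  have "f + (\<lambda>l. g l + s l) = (\<lambda>l. (f + g) l + s l)" by (simp add: plus_fun_def add.assoc)
  then show ?case using zspan.add[OF add.IH[OF add.prems] add.hyps(2)] by simp
next
  case (diff g s)
  have "f + (\<lambda>l. g l - s l) = (\<lambda>l. (f + g) l - s l)" by (simp add: plus_fun_def add_diff_eq)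
  then show ?case using zspan.diff[OF diff.IH[OF diff.prems] diff.hyps(2)] by simp
qed

lemma zspan_uminus: "f \<in> zspan S \<Longrightarrow> - f \<in> zspan S"
proof (induction f rule: zspan.induct)
  case zero
  then show ?case using zspan.zero by (simp add: fun_Compl_def)
next
  case (add g s)
  have "- (\<lambda>l. g l + s l) = (\<lambda>l. (- g) l - s l)" by (simp add: fun_eq_iff)
  then show ?case using zspan.diff[OF add.IH add.hyps(2)] by simp
next
  case (diff g s)
  have "- (\<lambda>l. g l - s l) = (\<lambda>l. (- g) l + s l)" by (simp add: fun_eq_iff)
  then show ?case using zspan.add[OF diff.IH diff.hyps(2)] by simp
qed

lemma zspan_diff: "f \<in> zspan S \<Longrightarrow> g \<in> zspan S \<Longrightarrow> f - g \<in> zspan S"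
  using zspan_add[OF zspan_uminus, of g S f] by simp

lemma zspan_mono: "f \<in> zspan S \<Longrightarrow> S \<subseteq> T \<Longrightarrow> f \<in> zspan T"
proof (induction f rule: zspan.induct)
  case zero show ?case by (rule zspan.zero)
next
  case (add f s) then show ?case by (auto intro: zspan.add)
next
  case (diff f s) then show ?case by (auto intro: zspan.diff)
qed

lemma zspan_subset: "(\<And>s. s \<in> S \<Longrightarrow> s \<in> zspan T) \<Longrightarrow> zspan S \<subseteq> zspan T"
proof
  fix f assume h: "\<And>s. s \<in> S \<Longrightarrow> s \<in> zspan T" and f: "f \<in> zspan S"
  from f show "f \<in> zspan T"
  proof (induction f rule: zspan.induct)
    case zero show ?case by (rule zspan.zero)
  next
    case (add f s)
    then show ?case using zspan_add[of s T f] h[of s] by (simp add: plus_fun_def)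
  next
    case (diff f s)
    then show ?case using zspan_diff[of f T s] h[of s] by (simp add: fun_diff_def)
  qed
qed

locale wctx =
  fixes N :: nat and pre post :: "'a::field list"
  assumes len: "length pre + 2 + length post = N"
    and nzp: "0 \<notin> set pre" and nzq: "0 \<notin> set post"
begin

definition D :: "'a \<Rightarrow> 'a \<Rightarrow> 'a list \<Rightarrow> int" where
  "D x y = delta (pre @ [x, y] @ post)"

lemma uw: "x \<noteq> 0 \<Longrightarrow> y \<noteq> 0 \<Longrightarrow> pre @ [x, y] @ post \<in> units_words N"
  using len nzp nzq by (auto simp: units_words_def)

lemma lin1:
  assumes "x \<noteq> 0" "x' \<noteq> 0" "y \<noteq> 0"
  shows "D (x * x') y - D x y - D x' y \<in> zspan (milnor_rels N)"
proof -
  have "(\<lambda>l. delta (pre @ [x * x'] @ (y # post)) l - delta (pre @ [x] @ (y # post)) l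
          - delta (pre @ [x'] @ (y # post)) l) \<in> milnor_rels N"
    unfolding milnor_rels_def
    apply (rule UnI1)
    apply (rule CollectI)
    apply (rule exI[of _ pre], rule exI[of _ "y # post"], rule exI[of _ x], rule exI[of _ x'])
    using uw[of x y] assms by simp
  then show ?thesis unfolding D_def by (simp add: fun_diff_def zspan_gen)
qed

lemma lin2:
  assumes "x \<noteq> 0" "y' \<noteq> 0" "y \<noteq> 0"
  shows "D x (y * y') - D x y - D x y' \<in> zspan (milnor_rels N)"
proof -
  have "(\<lambda>l. delta ((pre @ [x]) @ [y * y'] @ post) l - delta ((pre @ [x]) @ [y] @ post) l
          - delta ((pre @ [x]) @ [y'] @ post) l) \<in> milnor_rels N"
    unfolding milnor_rels_def
    apply (rule UnI1)
    apply (rule CollectI)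
    apply (rule exI[of _ "pre @ [x]"], rule exI[of _ post], rule exI[of _ y], rule exI[of _ y'])
    using uw[of x y] assms by simp
  then show ?thesis unfolding D_def by (simp add: fun_diff_def zspan_gen)
qed

lemma stein:
  assumes "x \<noteq> 0" "x \<noteq> 1"
  shows "D x (1 - x) \<in> zspan (milnor_rels N)"
proof -
  have "delta (pre @ [x, 1 - x] @ post) \<in> milnor_rels N"
    unfolding milnor_rels_def
    apply (rule UnI2)
    apply (rule CollectI)
    apply (rule exI[of _ pre], rule exI[of _ post], rule exI[of _ x])
    using uw[of x "1 - x"] assms by simp
  then show ?thesis by (auto simp: D_def intro: zspan_gen)
qed

lemmas cl = zspan_add zspan_diff zspan_uminus

lemma D1: "y \<noteq> 0 \<Longrightarrow> D 1 y \<in> zspan (milnor_rels N)"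
  using zspan_uminus[OF lin1[of 1 1 y]] by simp

lemma D1': "x \<noteq> 0 \<Longrightarrow> D x 1 \<in> zspan (milnor_rels N)"
  using zspan_uminus[OF lin2[of x 1 1]] by simp

lemma inv1:
  assumes "x \<noteq> 0" "y \<noteq> 0"
  shows "D (inverse x) y + D x y \<in> zspan (milnor_rels N)"
proof -
  have h1: "D (x * inverse x) y - D x y - D (inverse x) y \<in> zspan (milnor_rels N)"
    using lin1[of x "inverse x" y] assms by simp
  have h2: "D 1 y \<in> zspan (milnor_rels N)" using D1 assms by simp
  have e: "D (inverse x) y + D x y = D 1 y - (D (x * inverse x) y - D x y - D (inverse x) y)"
    using assms by simp
  show ?thesis unfolding e by (intro h1 h2 cl)
qed

lemma inv2:
  assumes "x \<noteq> 0" "y \<noteq> 0"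
  shows "D x (inverse y) + D x y \<in> zspan (milnor_rels N)"
proof -
  have h1: "D x (y * inverse y) - D x y - D x (inverse y) \<in> zspan (milnor_rels N)"
    using lin2[of x "inverse y" y] assms by simp
  have h2: "D x 1 \<in> zspan (milnor_rels N)" using D1' assms by simp
  have e: "D x (inverse y) + D x y = D x 1 - (D x (y * inverse y) - D x y - D x (inverse y))"
    using assms by simp
  show ?thesis unfolding e by (intro h1 h2 cl)
qed

lemma div1:
  assumes "x \<noteq> 0" "x' \<noteq> 0" "y \<noteq> 0"
  shows "D (x / x') y - D x y + D x' y \<in> zspan (milnor_rels N)"
proof -
  have h1: "D (x * inverse x') y - D x y - D (inverse x') y \<in> zspan (milnor_rels N)"
    using lin1[of x "inverse x'" y] assms by simp
  have h2: "D (inverse x') y + D x' y \<in> zspan (milnor_rels N)" using inv1 assms by simp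
  have e: "D (x / x') y - D x y + D x' y
     = (D (x * inverse x') y - D x y - D (inverse x') y) + (D (inverse x') y + D x' y)"
    by (simp add: divide_inverse)
  show ?thesis unfolding e by (intro h1 h2 cl)
qed

lemma div2:
  assumes "x \<noteq> 0" "y' \<noteq> 0" "y \<noteq> 0"
  shows "D x (y / y') - D x y + D x y' \<in> zspan (milnor_rels N)"
proof -
  have h1: "D x (y * inverse y') - D x y - D x (inverse y') \<in> zspan (milnor_rels N)"
    using lin2[of x "inverse y'" y] assms by simp
  have h2: "D x (inverse y') + D x y' \<in> zspan (milnor_rels N)" using inv2 assms by simp
  have e: "D x (y / y') - D x y + D x y'
     = (D x (y * inverse y') - D x y - D x (inverse y')) + (D x (inverse y') + D x y')"
    by (simp add: divide_inverse)
  show ?thesis unfolding e by (intro h1 h2 cl)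
qed

lemma negD:
  assumes "x \<noteq> 0"
  shows "D x (- x) \<in> zspan (milnor_rels N)"
proof (cases "x = 1")
  case True
  then show ?thesis using D1[of "-1"] by simp
next
  case False
  have nz1: "1 - x \<noteq> 0" using False by simp
  have nz2: "1 - inverse x \<noteq> 0" using False assms by (simp add: field_simps)
  have ix: "inverse x \<noteq> 1" using False assms by (metis inverse_1 inverse_inverse_eq)
  have eq: "- x = (1 - x) / (1 - inverse x)"
    using False assms by (simp add: field_simps)
  have h1: "D x ((1 - x) / (1 - inverse x)) - D x (1 - x) + D x (1 - inverse x) \<in> zspan (milnor_rels N)"
    using div2 assms nz1 nz2 by simp
  have h2: "D x (1 - x) \<in> zspan (milnor_rels N)" using stein assms False by simp
  have h3: "D (inverse x) (1 - inverse x) \<in> zspan (milnor_rels N)"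
    using stein[of "inverse x"] assms ix by simp
  have h4: "D (inverse x) (1 - inverse x) + D x (1 - inverse x) \<in> zspan (milnor_rels N)"
    using inv1 assms nz2 by simp
  have e: "D x (- x) = (D x ((1 - x) / (1 - inverse x)) - D x (1 - x) + D x (1 - inverse x))
     + D x (1 - x) - (D (inverse x) (1 - inverse x) + D x (1 - inverse x))
     + D (inverse x) (1 - inverse x)"
    by (simp add: eq[symmetric])
  show ?thesis unfolding e by (intro h1 h2 h3 h4 cl)
qed

lemma antisym:
  assumes "x \<noteq> 0" "y \<noteq> 0"
  shows "D x y + D y x \<in> zspan (milnor_rels N)"
proof -
  have h1: "D (x * y) (- (x * y)) \<in> zspan (milnor_rels N)" using negD assms by simp
  have h2: "D (x * y) (- (x * y)) - D x (- (x * y)) - D y (- (x * y)) \<in> zspan (milnor_rels N)"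
    using lin1[of x y "- (x * y)"] assms by simp
  have h3: "D x (- (x * y)) - D x (- x) - D x y \<in> zspan (milnor_rels N)"
    using lin2[of x y "- x"] assms by simp
  have h4: "D y (- (x * y)) - D y x - D y (- y) \<in> zspan (milnor_rels N)"
    using lin2[of y "- y" x] assms by (simp add: mult.commute)
  have h5: "D x (- x) \<in> zspan (milnor_rels N)" using negD assms by simp
  have h6: "D y (- y) \<in> zspan (milnor_rels N)" using negD assms by simp
  have e: "D x y + D y x = D (x * y) (- (x * y))
      - (D (x * y) (- (x * y)) - D x (- (x * y)) - D y (- (x * y)))
      - (D x (- (x * y)) - D x (- x) - D x y) - (D y (- (x * y)) - D y x - D y (- y))
      - D x (- x) - D y (- y)"
    by (simp add: algebra_simps)
  show ?thesis unfolding e by (intro h1 h2 h3 h4 h5 h6 cl)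
qed

lemma merge:
  assumes p0: "p \<noteq> 0" and p1: "p \<noteq> 1" and q0: "q \<noteq> 0" and r0: "r \<noteq> 0"
    and rdef: "r = p + q - p * q"
  shows "D p q - D r ((1 - p) * q / (p * r)) \<in> zspan (milnor_rels N)"
proof -
  define Y where "Y = (1 - p) * q / r"
  define c where "c = (1 - p) * q / (p * r)"
  have pq0: "(1 - p) * q \<noteq> 0" using p1 q0 by simp
  have Y0: "Y \<noteq> 0" using pq0 r0 by (simp add: Y_def)
  have x0: "p / r \<noteq> 0" using p0 r0 by simp
  have x1: "p / r \<noteq> 1" proof
    assume "p / r = 1" then have "p = r" using r0 by (simp add: field_simps)
    then have "(1 - p) * q = 0" using rdef by (simp add: algebra_simps)
    then show False using pq0 by simp
  qed
  have rp: "r - p = (1 - p) * q" using rdef by (simp add: algebra_simps)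
  have "(r - p) / r = 1 - p / r" using r0 by (simp add: diff_divide_distrib)
  then have oneY: "1 - p / r = Y" using rp by (simp add: Y_def)
  have s0: "D (p / r) Y \<in> zspan (milnor_rels N)" using stein[OF x0 x1] oneY by simp
  have s1: "D (p / r) Y - D p Y + D r Y \<in> zspan (milnor_rels N)" using div1 p0 r0 Y0 by simp
  have s2: "D p Y - D p ((1 - p) * q) + D p r \<in> zspan (milnor_rels N)"
    unfolding Y_def using div2 p0 r0 pq0 by simp
  have s3: "D p ((1 - p) * q) - D p (1 - p) - D p q \<in> zspan (milnor_rels N)"
    using lin2 p0 p1 q0 by simp
  have s4: "D r Y - D r ((1 - p) * q) + D r r \<in> zspan (milnor_rels N)"
    unfolding Y_def using div2 r0 pq0 by simp
  have s5: "D r ((1 - p) * q) - D r (1 - p) - D r q \<in> zspan (milnor_rels N)"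
    using lin2 r0 p1 q0 by simp
  have s6: "D p (1 - p) \<in> zspan (milnor_rels N)" using stein p0 p1 by simp
  have s7: "D p r + D r p \<in> zspan (milnor_rels N)" using antisym p0 r0 by simp
  have s8: "D r c - D r ((1 - p) * q) + D r (p * r) \<in> zspan (milnor_rels N)"
    unfolding c_def using div2 r0 pq0 p0 by simp
  have s9: "D r (p * r) - D r p - D r r \<in> zspan (milnor_rels N)"
    using lin2 r0 p0 by simp
  have e: "D p q - D r c = D (p / r) Y - (D (p / r) Y - D p Y + D r Y)
     - (D p Y - D p ((1 - p) * q) + D p r) - (D p ((1 - p) * q) - D p (1 - p) - D p q)
     - D p (1 - p) + (D r Y - D r ((1 - p) * q) + D r r)
     - (D r c - D r ((1 - p) * q) + D r (p * r)) + (D r (p * r) - D r p - D r r)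
     + (D p r + D r p)"
    by (simp add: algebra_simps)
  have "D p q - D r c \<in> zspan (milnor_rels N)" unfolding e by (intro s0 s1 s2 s3 s4 s6 s7 s8 s9 cl)
  then show ?thesis by (simp add: c_def)
qed

end

lemma wctx_of: "pre @ [a, b] @ post \<in> units_words N \<Longrightarrow> wctx N pre post"
  unfolding wctx_def units_words_def by auto

lemma swap:
  assumes u: "pre @ [a, b] @ post \<in> units_words N"
    and h: "delta (pre @ [a, b] @ post) \<in> zspan (milnor_rels N \<union> X)"
  shows "delta (pre @ [b, a] @ post) \<in> zspan (milnor_rels N \<union> X)"
proof -
  interpret wctx N pre post using wctx_of[OF u] .
  have a0: "a \<noteq> 0" and b0: "b \<noteq> 0" using u by (auto simp: units_words_def)
  have "D a b + D b a \<in> zspan (milnor_rels N \<union> X)"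
    using zspan_mono[OF antisym[OF a0 b0]] by blast
  then have "(D a b + D b a) - D a b \<in> zspan (milnor_rels N \<union> X)"
    using h by (intro zspan_diff) (auto simp: D_def)
  then show ?thesis by (simp add: D_def)
qed

lemma swap_iff:
  assumes u: "pre @ [a, b] @ post \<in> units_words N"
  shows "delta (pre @ [a, b] @ post) \<in> zspan (milnor_rels N \<union> X) \<longleftrightarrow>
         delta (pre @ [b, a] @ post) \<in> zspan (milnor_rels N \<union> X)"
proof -
  have u': "pre @ [b, a] @ post \<in> units_words N" using u by (auto simp: units_words_def)
  show ?thesis using swap[OF u] swap[OF u'] by blast
qed

lemma move:
  "pre @ xs @ a # zs \<in> units_words N \<Longrightarrow>
   delta (pre @ a # xs @ zs) \<in> zspan (milnor_rels N \<union> X) \<longleftrightarrow>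
   delta (pre @ xs @ a # zs) \<in> zspan (milnor_rels N \<union> X)"
proof (induction xs arbitrary: pre)
  case Nil
  then show ?case by simp
next
  case (Cons x xs)
  have u1: "pre @ [a, x] @ (xs @ zs) \<in> units_words N"
    using Cons.prems by (auto simp: units_words_def)
  have u2: "(pre @ [x]) @ xs @ a # zs \<in> units_words N"
    using Cons.prems by simp
  have "delta (pre @ a # (x # xs) @ zs) \<in> zspan (milnor_rels N \<union> X) \<longleftrightarrow>
        delta (pre @ [x, a] @ (xs @ zs)) \<in> zspan (milnor_rels N \<union> X)"
    using swap_iff[OF u1] by simp
  also have "\<dots> \<longleftrightarrow> delta ((pre @ [x]) @ a # xs @ zs) \<in> zspan (milnor_rels N \<union> X)" by simp
  also have "\<dots> \<longleftrightarrow> delta ((pre @ [x]) @ xs @ a # zs) \<in> zspan (milnor_rels N \<union> X)"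
    using Cons.IH[OF u2] .
  finally show ?case by simp
qed

lemma filter_move:
  "pre @ ys \<in> units_words N \<Longrightarrow>
   delta (pre @ filter Q ys @ filter (\<lambda>y. \<not> Q y) ys) \<in> zspan (milnor_rels N \<union> X) \<Longrightarrow>
   delta (pre @ ys) \<in> zspan (milnor_rels N \<union> X)"
proof (induction ys arbitrary: pre)
  case Nil
  then show ?case by simp
next
  case (Cons y ys)
  show ?case
  proof (cases "Q y")
    case True
    have "delta ((pre @ [y]) @ filter Q ys @ filter (\<lambda>y. \<not> Q y) ys) \<in> zspan (milnor_rels N \<union> X)"
      using Cons.prems(2) True by simp
    then have "delta ((pre @ [y]) @ ys) \<in> zspan (milnor_rels N \<union> X)"
      using Cons.IH[of "pre @ [y]"] Cons.prems(1) by simp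
    then show ?thesis by simp
  next
    case False
    have h: "delta (pre @ filter Q ys @ y # filter (\<lambda>y. \<not> Q y) ys) \<in> zspan (milnor_rels N \<union> X)"
      using Cons.prems(2) False by simp
    have u: "pre @ filter Q ys @ y # filter (\<lambda>y. \<not> Q y) ys \<in> units_words N"
      using Cons.prems(1) by (auto simp: units_words_def sum_length_filter_compl)
    have "delta ((pre @ [y]) @ filter Q ys @ filter (\<lambda>y. \<not> Q y) ys) \<in> zspan (milnor_rels N \<union> X)"
      using move[OF u] h by simp
    then have "delta ((pre @ [y]) @ ys) \<in> zspan (milnor_rels N \<union> X)"
      using Cons.IH[of "pre @ [y]"] Cons.prems(1) by simp
    then show ?thesis by simp
  qed
qed

lemma one_slot:
  assumes u: "xs @ [1] @ ys \<in> units_words N"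
  shows "delta (xs @ [1] @ ys) \<in> zspan (milnor_rels N)"
proof -
  have "(\<lambda>l. delta (xs @ [1 * 1] @ ys) l - delta (xs @ [1] @ ys) l - delta (xs @ [1] @ ys) l)
          \<in> milnor_rels N"
    unfolding milnor_rels_def
    apply (rule UnI1)
    apply (rule CollectI)
    apply (rule exI[of _ xs], rule exI[of _ ys], rule exI[of _ 1], rule exI[of _ 1])
    using u by simp
  then have "- delta (xs @ [1] @ ys) \<in> zspan (milnor_rels N)"
    using zspan_gen by (fastforce simp: fun_Compl_def)
  from zspan_uminus[OF this] show ?thesis by simp
qed

lemma front:
  assumes "u \<in> one_plus_mpow v m" "ws \<in> units_words n"
  shows "delta (u # ws) \<in> zspan (milnor_rels (Suc n) \<union> one_plus_mpow_K_gens v m n)"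
proof -
  have e: "delta (u # ws) = sym_mult u (delta ws)"
    by (auto simp: fun_eq_iff sym_mult_def delta_def split: list.split)
  have "delta ws \<in> free_words n" unfolding free_words_def using assms(2) by (auto intro: zspan_gen)
  then have "delta (u # ws) \<in> one_plus_mpow_K_gens v m n"
    unfolding one_plus_mpow_K_gens_def e using assms(1) by blast
  then show ?thesis by (auto intro: zspan_gen)
qed

lemma val1: "discrete_valuation v \<Longrightarrow> v 1 = 0"
  unfolding discrete_valuation_def by (metis add_cancel_left_right mult_1 one_neq_zero)

lemma valneg: "discrete_valuation v \<Longrightarrow> x \<noteq> 0 \<Longrightarrow> v (- x) = v x"
proof -
  assume dv: "discrete_valuation v" and x: "x \<noteq> 0"
  have m: "\<And>a b. a \<noteq> 0 \<Longrightarrow> b \<noteq> 0 \<Longrightarrow> v (a * b) = v a + v b"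
    using dv unfolding discrete_valuation_def by blast
  have "v ((-1) * (-1)) = v (-1) + v (-1)" by (rule m) auto
  then have "v (-1) = 0" using val1[OF dv] by simp
  moreover have "v ((-1) * x) = v (-1) + v x" by (rule m) (auto simp: x)
  ultimately show ?thesis by simp
qed

lemma main_claim:
  assumes dv: "discrete_valuation v" and m1: "m \<ge> 1"
  shows "(\<forall>u\<in>set us. u \<noteq> 0 \<and> u \<noteq> 1 \<and> v (u - 1) \<ge> 1) \<Longrightarrow>
    sum_list (map (\<lambda>u. v (u - 1)) us) \<ge> int m \<Longrightarrow> us @ ws \<in> units_words (Suc n) \<Longrightarrow>
    delta (us @ ws) \<in> zspan (milnor_rels (Suc n) \<union> one_plus_mpow_K_gens v m n)"
proof (induction "length us" arbitrary: us ws rule: less_induct)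
  case less
  have mul: "\<And>a b. a \<noteq> 0 \<Longrightarrow> b \<noteq> 0 \<Longrightarrow> v (a * b) = v a + v b"
    using dv unfolding discrete_valuation_def by blast
  show ?case
  proof (cases us)
    case Nil
    then show ?thesis using less.prems m1 by simp
  next
    case (Cons p us1)
    note C1 = Cons
    show ?thesis
    proof (cases us1)
      case Nil
      have p: "p \<noteq> 0" "p \<noteq> 1" "v (p - 1) \<ge> int m" using less.prems Cons Nil by auto
      have "p \<in> one_plus_mpow v m" using p by (simp add: one_plus_mpow_def ord_def)
      moreover have "ws \<in> units_words n" using less.prems(3) Cons Nil by (simp add: units_words_def)
      ultimately show ?thesis using front Cons Nil by simp
    next
      case (Cons q us')
      have us: "us = p # q # us'" using C1 Cons by simp
      have p: "p \<noteq> 0" "p \<noteq> 1" "v (p - 1) \<ge> 1" and q: "q \<noteq> 0" "q \<noteq> 1" "v (q - 1) \<ge> 1"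
        using less.prems(1) us by auto
      define r where "r = p + q - p * q"
      define c where "c = (1 - p) * q / (p * r)"
      have p1: "p - 1 \<noteq> 0" and q1: "q - 1 \<noteq> 0" using p q by auto
      have r1: "r - 1 = - ((p - 1) * (q - 1))" by (simp add: r_def algebra_simps)
      have vr: "v (r - 1) = v (p - 1) + v (q - 1)"
        unfolding r1 using valneg[OF dv] mul[OF p1 q1] p1 q1 by simp
      have rn1: "r \<noteq> 1" using r1 p1 q1 by auto
      have r0: "r \<noteq> 0"
      proof
        assume "r = 0"
        then have "v (r - 1) = 0" using valneg[OF dv, of 1] val1[OF dv] by simp
        then show False using vr p q by simp
      qed
      have c0: "c \<noteq> 0" using p q r0 by (simp add: c_def)
      have u0: "p # q # us' @ ws \<in> units_words (Suc n)" using less.prems(3) us by simp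
      have u1: "[r] @ us' @ c # ws \<in> units_words (Suc n)"
        using u0 r0 c0 by (auto simp: units_words_def)
      have IH: "delta ((r # us') @ (c # ws)) \<in> zspan (milnor_rels (Suc n) \<union> one_plus_mpow_K_gens v m n)"
      proof (rule less.hyps)
        show "length (r # us') < length us" using us by simp
        show "\<forall>u\<in>set (r # us'). u \<noteq> 0 \<and> u \<noteq> 1 \<and> 1 \<le> v (u - 1)"
          using less.prems(1) us r0 rn1 vr p q by auto
        show "int m \<le> sum_list (map (\<lambda>u. v (u - 1)) (r # us'))"
          using less.prems(2) us vr by simp
        show "(r # us') @ c # ws \<in> units_words (Suc n)" using u1 by simp
      qed
      then have h1: "delta ([r] @ c # us' @ ws) \<in> zspan (milnor_rels (Suc n) \<union> one_plus_mpow_K_gens v m n)"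
        using move[OF u1] by simp
      interpret wctx "Suc n" "[]" "us' @ ws" using wctx_of[of "[]" p q "us' @ ws"] u0 by simp
      have "D p q - D r c \<in> zspan (milnor_rels (Suc n))"
        unfolding c_def using merge[OF p(1) p(2) q(1) r0 r_def] .
      then have h2: "D p q - D r c \<in> zspan (milnor_rels (Suc n) \<union> one_plus_mpow_K_gens v m n)"
        by (rule zspan_mono) blast
      have "(D p q - D r c) + D r c \<in> zspan (milnor_rels (Suc n) \<union> one_plus_mpow_K_gens v m n)"
        using h1 h2 by (intro zspan_add) (auto simp: D_def)
      then show ?thesis using us by (simp add: D_def)
    qed
  qed
qed

lemma sum_ord:
  "(\<forall>y\<in>set ys. y \<noteq> 1) \<Longrightarrow>
   sum_list (map (\<lambda>y. ord v (y - 1)) ys) = ereal (real_of_int (sum_list (map (\<lambda>y. v (y - 1)) ys)))"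
  by (induction ys) (auto simp: ord_def)

lemma sum_filter:
  "(\<forall>y\<in>set ys. \<not> Q y \<longrightarrow> f y \<le> (0::int)) \<Longrightarrow>
   sum_list (map f ys) \<le> sum_list (map f (filter Q ys))"
  by (induction ys) auto

theorem lemma3p3:
  fixes v :: "'a::field \<Rightarrow> int" and m n :: nat
  assumes "discrete_valuation v" and "m \<ge> 1"
  shows "zspan (milnor_rels (Suc n) \<union> KM_m_gens v (Suc n) m)
           \<subseteq> zspan (milnor_rels (Suc n) \<union> one_plus_mpow_K_gens v m n)"
proof (rule zspan_subset)
  fix s assume "s \<in> milnor_rels (Suc n) \<union> KM_m_gens v (Suc n) m"
  then show "s \<in> zspan (milnor_rels (Suc n) \<union> one_plus_mpow_K_gens v m n)"
  proof
    assume "s \<in> milnor_rels (Suc n)"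
    then show ?thesis by (auto intro: zspan_gen)
  next
    assume "s \<in> KM_m_gens v (Suc n) m"
    then obtain ys where s: "s = delta ys" and ys: "ys \<in> units_words (Suc n)"
      and sm: "sum_list (map (\<lambda>y. ord v (y - 1)) ys) \<ge> ereal (real m)"
      unfolding KM_m_gens_def by blast
    show ?thesis
    proof (cases "1 \<in> set ys")
      case True
      then obtain xs zs where "ys = xs @ 1 # zs" by (meson split_list)
      then have "delta ys \<in> zspan (milnor_rels (Suc n))" using one_slot[of xs zs] ys by simp
      then show ?thesis unfolding s by (rule zspan_mono) blast
    next
      case False
      define f where "f = (\<lambda>y. v (y - 1))"
      define Q where "Q = (\<lambda>y. f y \<ge> 1)"
      have e: "sum_list (map (\<lambda>y. ord v (y - 1)) ys) = ereal (real_of_int (sum_list (map f ys)))"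
        using sum_ord[of ys v] False unfolding f_def by auto
      have "ereal (real_of_int (sum_list (map f ys))) \<ge> ereal (real m)"
        using sm unfolding e .
      then have s1: "sum_list (map f ys) \<ge> int m" by simp
      have "sum_list (map f ys) \<le> sum_list (map f (filter Q ys))"
        by (rule sum_filter) (auto simp: Q_def)
      then have s2: "sum_list (map (\<lambda>u. v (u - 1)) (filter Q ys)) \<ge> int m"
        using s1 by (simp add: f_def)
      have u: "[] @ ys \<in> units_words (Suc n)" using ys by simp
      have "filter Q ys @ filter (\<lambda>y. \<not> Q y) ys \<in> units_words (Suc n)"
        using ys by (auto simp: units_words_def sum_length_filter_compl)
      moreover have "\<forall>u\<in>set (filter Q ys). u \<noteq> 0 \<and> u \<noteq> 1 \<and> v (u - 1) \<ge> 1"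
        using ys False by (auto simp: units_words_def Q_def f_def)
      ultimately have "delta (filter Q ys @ filter (\<lambda>y. \<not> Q y) ys)
          \<in> zspan (milnor_rels (Suc n) \<union> one_plus_mpow_K_gens v m n)"
        using main_claim[OF assms] s2 by blast
      then show ?thesis using filter_move[OF u] s by simp
    qed
  qed
qed

end
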